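(* Let $a,b\ge 0$ and $c>0$, and let $q:\mathbb R^M\to\mathbb R_+$ be a positive semidefinite quadratic form. Then the function $x\mapsto\left(a-b\,e^{-b\,q(x)}\right)e^{-c\,q(x)}$ is log-concave on $\mathbb R^M$ whenever $a\ge\frac{b^2+2bc}{c}$.
   Context: A function $f:\mathbb R^M\to\mathbb R_{\ge 0}$ is log-concave if $\log f$ is concave. *)

theory Defs
  imports "HOL-Analysis.Analysis"
begin

definition ln_ext :: "real \<Rightarrow> ereal" where
  "ln_ext x = (if x > 0 then ereal (ln x) else -\<infinity>)"

definition log_concave :: "('a::real_vector \<Rightarrow> real) \<Rightarrow> bool" where
  "log_concave f \<longleftrightarrow> (\<forall>x. f x \<ge> 0) \<and>
     (\<forall>x y t. 0 \<le> t \<and> t \<le> 1 \<longrightarrow>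
        ereal (1 - t) * ln_ext (f x) + ereal t * ln_ext (f y)
          \<le> ln_ext (f ((1 - t) *\<^sub>R x + t *\<^sub>R y)))"

definition quadratic_form :: "(real ^ 'M \<Rightarrow> real) \<Rightarrow> bool" where
  "quadratic_form q \<longleftrightarrow> (\<exists>A :: real ^ 'M ^ 'M. \<forall>x. q x = x \<bullet> (A *v x))"

definition psd_quadratic_form :: "(real ^ 'M \<Rightarrow> real) \<Rightarrow> bool" where
  "psd_quadratic_form q \<longleftrightarrow> quadratic_form q \<and> (\<forall>x. q x \<ge> 0)"

end

theory Submission
  imports Defs
begin

lemma q_convex:
  fixes q :: "real ^ 'M \<Rightarrow> real"
  assumes "psd_quadratic_form q" "0 \<le> t" "t \<le> 1"
  shows "q ((1 - t) *\<^sub>R x + t *\<^sub>R y) \<le> (1 - t) * q x + t * q y"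
proof -
  obtain A :: "real ^ 'M ^ 'M" where A: "\<And>x. q x = x \<bullet> (A *v x)"
    using assms(1) unfolding psd_quadratic_form_def quadratic_form_def by blast
  have nn: "q (x - y) \<ge> 0" using assms(1) unfolding psd_quadratic_form_def by blast
  have e: "(1 - t) * q x + t * q y - q ((1 - t) *\<^sub>R x + t *\<^sub>R y) = t * (1 - t) * q (x - y)"
    unfolding A
    by (simp add: matrix_vector_mult_diff_distrib matrix_vector_right_distrib
        matrix_vector_mult_scaleR inner_diff_left inner_diff_right inner_add_left
        inner_add_right algebra_simps power2_eq_square)
  have "t * (1 - t) * q (x - y) \<ge> 0" using assms nn by simp
  with e show ?thesis by linarith
qed

lemma F_mono:
  fixes a b c s s' :: real
  assumes "b \<ge> 0" "c > 0" "a \<ge> (b\<^sup>2 + 2 * b * c) / c" "0 \<le> s" "s \<le> s'"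
  shows "(a - b * exp (- b * s')) * exp (- c * s') \<le> (a - b * exp (- b * s)) * exp (- c * s)"
proof (rule DERIV_nonpos_imp_nonincreasing[OF assms(5)])
  have ac: "a * c \<ge> b\<^sup>2 + 2 * b * c" using assms(2,3) by (simp add: field_simps)
  fix x assume x: "s \<le> x" "x \<le> s'"
  have e1: "exp (- b * x) \<le> 1" using assms(1,4) x by simp
  have "b * (b + c) * exp (- b * x) \<le> b * (b + c)"
    using e1 assms(1,2) by (simp add: mult_left_le)
  also have "\<dots> \<le> a * c" proof -
    have "b * c \<ge> 0" using assms(1,2) by simp
    then show ?thesis using ac by (simp add: power2_eq_square algebra_simps)
  qed
  finally have k: "b * (b + c) * exp (- b * x) \<le> a * c" .
  show "\<exists>y. ((\<lambda>s. (a - b * exp (- b * s)) * exp (- c * s)) has_real_derivative y) (at x) \<and> y \<le> 0"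
  proof (intro exI conjI)
    show "((\<lambda>s. (a - b * exp (- b * s)) * exp (- c * s)) has_real_derivative
       exp (- c * x) * (b * (b + c) * exp (- b * x) - a * c)) (at x)"
      apply (rule derivative_eq_intros refl)+
      apply (simp add: algebra_simps power2_eq_square)
      done
    show "exp (- c * x) * (b * (b + c) * exp (- b * x) - a * c) \<le> 0"
      using k by (simp add: mult_nonneg_nonpos)
  qed
qed

lemma phi_conc:
  fixes a b s1 s2 t :: real
  assumes "\<And>s. s \<ge> 0 \<Longrightarrow> a - b * exp (- b * s) > 0" "b \<ge> 0" "0 \<le> s1" "0 \<le> s2" "0 \<le> t" "t \<le> 1"
  shows "(1 - t) * ln (a - b * exp (- b * s1)) + t * ln (a - b * exp (- b * s2))
     \<le> ln (a - b * exp (- b * ((1 - t) * s1 + t * s2)))"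
proof -
  have m0: "(1 - t) * s1 + t * s2 \<ge> 0" using assms by simp
  have "exp (- b * ((1 - t) * s1 + t * s2)) = exp ((1 - t) *\<^sub>R (- b * s1) + t *\<^sub>R (- b * s2))"
    by (simp add: algebra_simps)
  also have "\<dots> \<le> (1 - t) * exp (- b * s1) + t * exp (- b * s2)"
    using convex_onD[OF exp_convex] assms(5,6) by blast
  finally have ex: "exp (- b * ((1 - t) * s1 + t * s2)) \<le> (1 - t) * exp (- b * s1) + t * exp (- b * s2)" .
  have "(1 - t) * ln (a - b * exp (- b * s1)) + t * ln (a - b * exp (- b * s2))
     \<le> ln ((1 - t) *\<^sub>R (a - b * exp (- b * s1)) + t *\<^sub>R (a - b * exp (- b * s2)))"
    using concave_onD[OF ln_concave, of t "a - b * exp (- b * s1)" "a - b * exp (- b * s2)"]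
      assms by auto
  also have "\<dots> \<le> ln (a - b * exp (- b * ((1 - t) * s1 + t * s2)))"
  proof (subst ln_le_cancel_iff)
    show "0 < (1 - t) *\<^sub>R (a - b * exp (- b * s1)) + t *\<^sub>R (a - b * exp (- b * s2))"
    proof -
      define p1 where "p1 = a - b * exp (- b * s1)"
      define p2 where "p2 = a - b * exp (- b * s2)"
      have p: "p1 > 0" "p2 > 0" using assms(1)[OF assms(3)] assms(1)[OF assms(4)] p1_def p2_def by auto
      have "(1 - t) * min p1 p2 \<le> (1 - t) * p1" using assms(6) by (intro mult_left_mono) auto
      moreover have "t * min p1 p2 \<le> t * p2" using assms(5) by (intro mult_left_mono) auto
      moreover have "min p1 p2 > 0" using p by simp
      moreover have "(1 - t) * min p1 p2 + t * min p1 p2 = min p1 p2" by (simp add: algebra_simps)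
      ultimately have "0 < (1 - t) * p1 + t * p2" by linarith
      then show ?thesis by (simp add: p1_def p2_def)
    qed
    show "0 < a - b * exp (- b * ((1 - t) * s1 + t * s2))" using assms(1)[OF m0] .
    have "b * exp (- b * ((1 - t) * s1 + t * s2)) \<le> b * ((1 - t) * exp (- b * s1) + t * exp (- b * s2))"
      using ex assms(2) by (rule mult_left_mono)
    then show "(1 - t) *\<^sub>R (a - b * exp (- b * s1)) + t *\<^sub>R (a - b * exp (- b * s2))
      \<le> a - b * exp (- b * ((1 - t) * s1 + t * s2))"
      by (simp add: algebra_simps)
  qed
  finally show ?thesis .
qed

theorem lemma2:
  fixes q :: "real ^ 'M \<Rightarrow> real" and a b c :: real
  assumes "a \<ge> 0" and "b \<ge> 0" and "c > 0"
    and "psd_quadratic_form q"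
    and "a \<ge> (b\<^sup>2 + 2 * b * c) / c"
  shows "log_concave (\<lambda>x. (a - b * exp (- b * q x)) * exp (- c * q x))"
proof -
  have q0: "\<And>x. q x \<ge> 0" using assms(4) unfolding psd_quadratic_form_def by blast
  have ac: "a * c \<ge> b\<^sup>2 + 2 * b * c" using assms(3,5) by (simp add: field_simps)
  have a2b: "a \<ge> 2 * b"
  proof -
    have "b\<^sup>2 \<ge> 0" by simp
    then have "2 * b * c \<le> a * c" using ac by linarith
    then show ?thesis using assms(3) by (simp add: mult_le_cancel_right)
  qed
  show ?thesis
  proof (cases "a = 0")
    case True
    then have "b = 0" using a2b assms(2) by simp
    then have f0: "\<And>x. (a - b * exp (- b * q x)) * exp (- c * q x) = 0" using True by simp
    show ?thesis unfolding log_concave_def f0 ln_ext_def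
    proof (intro conjI allI impI)
      fix t :: real assume t: "0 \<le> t \<and> t \<le> 1"
      show "ereal (1 - t) * (if (0::real) > 0 then ereal (ln 0) else - \<infinity>) + ereal t * (if (0::real) > 0 then ereal (ln 0) else - \<infinity>)
            \<le> (if (0::real) > 0 then ereal (ln 0) else - \<infinity>)"
        using t by (cases "t = 0"; cases "t = 1"; simp)
    qed simp
  next
    case False
    then have apos: "a > 0" using assms(1) by simp
    have pos: "\<And>s. s \<ge> 0 \<Longrightarrow> a - b * exp (- b * s) > 0"
    proof -
      fix s :: real assume s: "s \<ge> 0"
      have "exp (- b * s) \<le> 1" using s assms(2) by simp
      then have "b * exp (- b * s) \<le> b" using assms(2) by (simp add: mult_left_le)
      then show "a - b * exp (- b * s) > 0" using a2b apos assms(2) by linarith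
    qed
    define F where "F s = (a - b * exp (- b * s)) * exp (- c * s)" for s
    define h where "h s = ln (a - b * exp (- b * s)) - c * s" for s
    have Fpos: "\<And>s. s \<ge> 0 \<Longrightarrow> F s > 0" using pos unfolding F_def by (simp add: mult_pos_pos)
    have lnF: "\<And>s. s \<ge> 0 \<Longrightarrow> ln (F s) = h s"
    proof -
      fix s :: real assume "s \<ge> 0"
      then have "a - b * exp (- b * s) > 0" by (rule pos)
      then show "ln (F s) = h s" unfolding F_def h_def by (simp add: ln_mult)
    qed
    have hmono: "\<And>s s'. 0 \<le> s \<Longrightarrow> s \<le> s' \<Longrightarrow> h s' \<le> h s"
    proof -
      fix s s' :: real assume ss: "0 \<le> s" "s \<le> s'"
      have "F s' \<le> F s" unfolding F_def using F_mono[OF assms(2,3,5) ss] .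
      then have "ln (F s') \<le> ln (F s)" using Fpos ss by simp
      then show "h s' \<le> h s" using lnF ss by simp
    qed
    have hconc: "\<And>s1 s2 t. 0 \<le> s1 \<Longrightarrow> 0 \<le> s2 \<Longrightarrow> 0 \<le> t \<Longrightarrow> t \<le> 1 \<Longrightarrow>
        (1 - t) * h s1 + t * h s2 \<le> h ((1 - t) * s1 + t * s2)"
    proof -
      fix s1 s2 t :: real assume st: "0 \<le> s1" "0 \<le> s2" "0 \<le> t" "t \<le> 1"
      have "(1 - t) * h s1 + t * h s2 = (1 - t) * ln (a - b * exp (- b * s1)) + t * ln (a - b * exp (- b * s2))
          - c * ((1 - t) * s1 + t * s2)" unfolding h_def by (simp add: algebra_simps)
      also have "\<dots> \<le> ln (a - b * exp (- b * ((1 - t) * s1 + t * s2))) - c * ((1 - t) * s1 + t * s2)"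
        using phi_conc[OF pos assms(2) st] by simp
      finally show "(1 - t) * h s1 + t * h s2 \<le> h ((1 - t) * s1 + t * s2)" unfolding h_def .
    qed
    have fe: "(\<lambda>x. (a - b * exp (- b * q x)) * exp (- c * q x)) = (\<lambda>x. F (q x))" unfolding F_def by simp
    show ?thesis unfolding log_concave_def fe
    proof (intro conjI allI impI)
      fix x show "0 \<le> F (q x)" using Fpos q0 less_imp_le by blast
    next
      fix x y and t :: real assume t: "0 \<le> t \<and> t \<le> 1"
      have lx: "ln_ext (F (q x)) = ereal (h (q x))" using Fpos[OF q0] lnF[OF q0] unfolding ln_ext_def by simp
      have ly: "ln_ext (F (q y)) = ereal (h (q y))" using Fpos[OF q0] lnF[OF q0] unfolding ln_ext_def by simp
      have lz: "ln_ext (F (q ((1 - t) *\<^sub>R x + t *\<^sub>R y))) = ereal (h (q ((1 - t) *\<^sub>R x + t *\<^sub>R y)))"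
        using Fpos[OF q0] lnF[OF q0] unfolding ln_ext_def by simp
      have m0: "(1 - t) * q x + t * q y \<ge> 0" using q0[of x] q0[of y] t by simp
      have "(1 - t) * h (q x) + t * h (q y) \<le> h ((1 - t) * q x + t * q y)"
        using hconc q0 t by blast
      also have "\<dots> \<le> h (q ((1 - t) *\<^sub>R x + t *\<^sub>R y))"
        using hmono[OF q0 q_convex[OF assms(4)]] t by blast
      finally have r: "(1 - t) * h (q x) + t * h (q y) \<le> h (q ((1 - t) *\<^sub>R x + t *\<^sub>R y))" .
      show "ereal (1 - t) * ln_ext (F (q x)) + ereal t * ln_ext (F (q y))
          \<le> ln_ext (F (q ((1 - t) *\<^sub>R x + t *\<^sub>R y)))"
        unfolding lx ly lz using r by simp
    qed
  qed
qed

end
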